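(* Let $A=(a_i)_{i=1,\dots,n}$ be a sequence of distinct integers between $1$ and $n$ whose permutation graph $G_A$ is bipartite, and let $I,J$ be maximum feasible sets for $A$. Suppose that $(A,I,J)$ has no forbidden pairs, and let $a_i,a_j$ be the elements of the leftmost mixed pile $P_t$, with $i\in I$ and $j\in J$. Then at least one of $(I\setminus\{i\})\cup\{j\}$ and $(J\setminus\{j\})\cup\{i\}$ is feasible.
   Context: A set $I\subseteq[n]$ is feasible for $A$ if $a_i<a_j$ for all $i,j\in I$ with $i<j$; a maximum feasible set is one of largest cardinality. The permutation graph $G_A$ has vertex set $[n]$ and, for $i<j$, an edge $\{i,j\}$ iff $a_i>a_j$. Piles: set $a_0=0$; start with empty piles $P_0,\dots,P_n$; for $i=0,1,\dots,n$ in order, put $a_i$ on top of the pile $P_j$ with smallest index $j$ such that $P_j$ is empty or the top element of $P_j$ is greater than $a_i$; let $P_0,\dots,P_k$ be the resulting nonempty piles. A pile is mixed if it contains exactly two elements $a_i$ and $a_j$ with $i\in I$ and $j\in J$ (with $i\ne j$, so that $i\notin J$, $j\notin I$). A mixed pile $P_t$ is the leftmost mixed pile if no pile $P_s$ with $s<t$ is mixed. A pair of mixed piles is a forbidden pair if the four vertices (indices) of their elements induce a cycle of length $4$ in $G_A$. *)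

theory Defs
  imports Main
begin

(* A sequence a_1..a_n is modelled by a :: nat => nat, only values on {1..n} matter. *)

definition is_perm_seq :: "(nat \<Rightarrow> nat) \<Rightarrow> nat \<Rightarrow> bool" where
  "is_perm_seq a n \<longleftrightarrow> inj_on a {1..n} \<and> a ` {1..n} \<subseteq> {1..n}"

definition feasible :: "(nat \<Rightarrow> nat) \<Rightarrow> nat \<Rightarrow> nat set \<Rightarrow> bool" where
  "feasible a n I \<longleftrightarrow> I \<subseteq> {1..n} \<and> (\<forall>i\<in>I. \<forall>j\<in>I. i < j \<longrightarrow> a i < a j)"

definition max_feasible :: "(nat \<Rightarrow> nat) \<Rightarrow> nat \<Rightarrow> nat set \<Rightarrow> bool" where
  "max_feasible a n I \<longleftrightarrow> feasible a n I \<and> (\<forall>K. feasible a n K \<longrightarrow> card K \<le> card I)"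

definition pedge :: "(nat \<Rightarrow> nat) \<Rightarrow> nat \<Rightarrow> nat \<Rightarrow> nat \<Rightarrow> bool" where
  "pedge a n u v \<longleftrightarrow> u \<in> {1..n} \<and> v \<in> {1..n} \<and>
     ((u < v \<and> a u > a v) \<or> (v < u \<and> a v > a u))"

definition perm_graph_bipartite :: "(nat \<Rightarrow> nat) \<Rightarrow> nat \<Rightarrow> bool" where
  "perm_graph_bipartite a n \<longleftrightarrow>
     (\<exists>X. X \<subseteq> {1..n} \<and> (\<forall>u v. pedge a n u v \<longrightarrow> (u \<in> X \<longleftrightarrow> v \<notin> X)))"

(* Patience sorting. Piles store indices (pile P_j holds the elements a_i, recorded by i);
   the head of a list is the top of the pile. a_0 = 0. *)
definition seq0 :: "(nat \<Rightarrow> nat) \<Rightarrow> nat \<Rightarrow> nat" where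
  "seq0 a i = (if i = 0 then 0 else a i)"

definition pile_step :: "(nat \<Rightarrow> nat) \<Rightarrow> (nat \<Rightarrow> nat list) \<Rightarrow> nat \<Rightarrow> (nat \<Rightarrow> nat list)" where
  "pile_step a P i =
     (let j = (LEAST j. P j = [] \<or> seq0 a (hd (P j)) > seq0 a i) in P(j := i # P j))"

definition piles :: "(nat \<Rightarrow> nat) \<Rightarrow> nat \<Rightarrow> nat \<Rightarrow> nat list" where
  "piles a n = foldl (pile_step a) (\<lambda>_. []) [0..<Suc n]"

definition mixed :: "(nat \<Rightarrow> nat) \<Rightarrow> nat \<Rightarrow> nat set \<Rightarrow> nat set \<Rightarrow> nat \<Rightarrow> bool" where
  "mixed a n I J t \<longleftrightarrow> length (piles a n t) = 2 \<and>
     (\<exists>i j. set (piles a n t) = {i, j} \<and> i \<in> I \<and> j \<in> J \<and> i \<noteq> j)"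

definition leftmost_mixed :: "(nat \<Rightarrow> nat) \<Rightarrow> nat \<Rightarrow> nat set \<Rightarrow> nat set \<Rightarrow> nat \<Rightarrow> bool" where
  "leftmost_mixed a n I J t \<longleftrightarrow> mixed a n I J t \<and> (\<forall>s<t. \<not> mixed a n I J s)"

definition induces_C4 :: "(nat \<Rightarrow> nat) \<Rightarrow> nat \<Rightarrow> nat set \<Rightarrow> bool" where
  "induces_C4 a n S \<longleftrightarrow> (\<exists>v1 v2 v3 v4. S = {v1, v2, v3, v4} \<and> distinct [v1, v2, v3, v4] \<and>
     pedge a n v1 v2 \<and> pedge a n v2 v3 \<and> pedge a n v3 v4 \<and> pedge a n v4 v1 \<and>
     \<not> pedge a n v1 v3 \<and> \<not> pedge a n v2 v4)"

definition forbidden_pair :: "(nat \<Rightarrow> nat) \<Rightarrow> nat \<Rightarrow> nat set \<Rightarrow> nat set \<Rightarrow> nat \<Rightarrow> nat \<Rightarrow> bool" where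
  "forbidden_pair a n I J s t \<longleftrightarrow> s \<noteq> t \<and> mixed a n I J s \<and> mixed a n I J t \<and>
     induces_C4 a n (set (piles a n s) \<union> set (piles a n t))"

definition no_forbidden_pairs :: "(nat \<Rightarrow> nat) \<Rightarrow> nat \<Rightarrow> nat set \<Rightarrow> nat set \<Rightarrow> bool" where
  "no_forbidden_pairs a n I J \<longleftrightarrow> (\<forall>s t. \<not> forbidden_pair a n I J s t)"

end

theory Submission
  imports Defs
begin

definition st :: "(nat \<Rightarrow> nat) \<Rightarrow> nat \<Rightarrow> (nat \<Rightarrow> nat list)" where
  "st a m = foldl (pile_step a) (\<lambda>_. []) [0..<m]"

lemma st_Suc: "st a (Suc m) = pile_step a (st a m) m"
  by (simp add: st_def)

definition pinv :: "(nat \<Rightarrow> nat) \<Rightarrow> nat \<Rightarrow> (nat \<Rightarrow> nat list) \<Rightarrow> bool" where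
"pinv a m S \<longleftrightarrow>
 (\<forall>p. set (S p) \<subseteq> {..<m}) \<and>
 (\<forall>x<m. \<exists>p. x \<in> set (S p)) \<and>
 (\<forall>x p q. x \<in> set (S p) \<longrightarrow> x \<in> set (S q) \<longrightarrow> p = q) \<and>
 (\<forall>p. sorted_wrt (\<lambda>x y. y < x \<and> seq0 a x < seq0 a y) (S p)) \<and>
 (\<forall>p. S p = [] \<longrightarrow> S (Suc p) = []) \<and>
 (\<forall>p q. p < q \<longrightarrow> S q \<noteq> [] \<longrightarrow> seq0 a (hd (S p)) < seq0 a (hd (S q))) \<and>
 (\<forall>p\<ge>m. S p = []) \<and>
 (\<forall>v p. v \<in> set (S (Suc p)) \<longrightarrow> (\<exists>u\<in>set (S p). u < v \<and> seq0 a u < seq0 a v)) \<and>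
 (\<forall>u v p q. u \<in> set (S p) \<longrightarrow> v \<in> set (S q) \<longrightarrow> u < v \<longrightarrow> seq0 a u < seq0 a v \<longrightarrow> p < q)"

lemma sw_hd:
  assumes "sorted_wrt (\<lambda>x y. y < x \<and> (f x::'b::linorder) < f y) (xs::nat list)" "y \<in> set xs"
  shows "y \<le> hd xs \<and> f (hd xs) \<le> f y"
  using assms by (cases xs) auto

lemma pinv_0: "pinv a 0 (\<lambda>_. [])"
  by (simp add: pinv_def)

lemma pinv_step:
  assumes inv: "pinv a m S" and inj: "inj_on (seq0 a) {0..m}"
  shows "pinv a (Suc m) (pile_step a S m)"
proof -
  let ?f = "seq0 a"
  have A: "\<forall>p. set (S p) \<subseteq> {..<m}" using inv unfolding pinv_def by (elim conjE) assumption
  have B: "\<forall>x<m. \<exists>p. x \<in> set (S p)" using inv unfolding pinv_def by (elim conjE) assumption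
  have C: "\<forall>x p q. x \<in> set (S p) \<longrightarrow> x \<in> set (S q) \<longrightarrow> p = q" using inv unfolding pinv_def by (elim conjE) assumption
  have D: "\<forall>p. sorted_wrt (\<lambda>x y. y < x \<and> ?f x < ?f y) (S p)" using inv unfolding pinv_def by (elim conjE) assumption
  have E: "\<forall>p. S p = [] \<longrightarrow> S (Suc p) = []" using inv unfolding pinv_def by (elim conjE) assumption
  have F: "\<forall>p q. p < q \<longrightarrow> S q \<noteq> [] \<longrightarrow> ?f (hd (S p)) < ?f (hd (S q))" using inv unfolding pinv_def by (elim conjE) assumption
  have G: "\<forall>p\<ge>m. S p = []" using inv unfolding pinv_def by (elim conjE) assumption
  have H: "\<forall>v p. v \<in> set (S (Suc p)) \<longrightarrow> (\<exists>u\<in>set (S p). u < v \<and> ?f u < ?f v)" using inv unfolding pinv_def by (elim conjE) assumption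
  have K: "\<forall>u v p q. u \<in> set (S p) \<longrightarrow> v \<in> set (S q) \<longrightarrow> u < v \<longrightarrow> ?f u < ?f v \<longrightarrow> p < q" using inv unfolding pinv_def by (elim conjE) assumption
  define j where "j = (LEAST j. S j = [] \<or> ?f (hd (S j)) > ?f m)"
  define S' where "S' = S(j := m # S j)"
  have PS: "pile_step a S m = S'" unfolding pile_step_def j_def Let_def S'_def by simp
  have Sm: "S m = []" using G by simp
  have jQ: "S j = [] \<or> ?f (hd (S j)) > ?f m" unfolding j_def by (rule LeastI[of _ m]) (simp add: Sm)
  have jle: "j \<le> m" unfolding j_def by (rule Least_le) (simp add: Sm)
  have jmin: "S p \<noteq> [] \<and> ?f (hd (S p)) < ?f m" if "p < j" for p
  proof -
    have n: "\<not> (S p = [] \<or> ?f (hd (S p)) > ?f m)" using that unfolding j_def by (rule not_less_Least)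
    then have ne: "S p \<noteq> []" and le: "?f (hd (S p)) \<le> ?f m" by auto
    have "hd (S p) \<in> set (S p)" using ne by simp
    then have "hd (S p) < m" using A by auto
    then have "?f (hd (S p)) \<noteq> ?f m" using inj by (auto dest: inj_onD)
    with le ne show ?thesis by simp
  qed
  have down0: "S (q + d) = []" if "S q = []" for q d
    using that E by (induction d) auto
  have down: "S q \<noteq> []" if "S p \<noteq> []" "q \<le> p" for p q
    using down0[of q "p - q"] that by auto
  have setS': "set (S' p) = (if p = j then insert m (set (S p)) else set (S p))" for p
    by (simp add: S'_def)
  have mnot: "m \<notin> set (S p)" for p using A by auto
  have A': "\<forall>p. set (S' p) \<subseteq> {..<Suc m}"
  proof
    fix p show "set (S' p) \<subseteq> {..<Suc m}" using A[rule_format, of p] setS'[of p] by auto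
  qed
  have B': "\<forall>x<Suc m. \<exists>p. x \<in> set (S' p)"
  proof (intro allI impI)
    fix x assume "x < Suc m"
    show "\<exists>p. x \<in> set (S' p)"
    proof (cases "x = m")
      case True then show ?thesis using setS'[of j] by auto
    next
      case False then obtain p where "x \<in> set (S p)" using B \<open>x < Suc m\<close> by fastforce
      then show ?thesis using setS'[of p] by (auto split: if_splits)
    qed
  qed
  have C': "\<forall>x p q. x \<in> set (S' p) \<longrightarrow> x \<in> set (S' q) \<longrightarrow> p = q"
  proof (intro allI impI)
    fix x p q assume xp: "x \<in> set (S' p)" and xq: "x \<in> set (S' q)"
    show "p = q"
    proof (cases "x = m")
      case True
      then have "p = j" "q = j" using xp xq setS'[of p] setS'[of q] mnot by (auto split: if_splits)
      then show ?thesis by simp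
    next
      case False
      then have "x \<in> set (S p)" "x \<in> set (S q)" using xp xq setS'[of p] setS'[of q] by (auto split: if_splits)
      then show ?thesis using C by blast
    qed
  qed
  have D': "\<forall>p. sorted_wrt (\<lambda>x y. y < x \<and> ?f x < ?f y) (S' p)"
  proof
    fix p
    show "sorted_wrt (\<lambda>x y. y < x \<and> ?f x < ?f y) (S' p)"
    proof (cases "p = j")
      case False then show ?thesis using D by (simp add: S'_def)
    next
      case True
      have "y < m \<and> ?f m < ?f y" if y: "y \<in> set (S j)" for y
      proof -
        have "y < m" using A y by auto
        moreover have "S j \<noteq> []" using y by auto
        then have "?f m < ?f (hd (S j))" using jQ by simp
        moreover have "?f (hd (S j)) \<le> ?f y" using sw_hd[OF D[rule_format, of j] y] by simp
        ultimately show ?thesis by simp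
      qed
      then show ?thesis using True D by (simp add: S'_def)
    qed
  qed
  have E': "\<forall>p. S' p = [] \<longrightarrow> S' (Suc p) = []"
  proof (intro allI impI)
    fix p assume "S' p = []"
    then have pj: "p \<noteq> j" and sp: "S p = []" by (auto simp: S'_def split: if_splits)
    have "Suc p \<noteq> j" using jmin[of p] sp by auto
    then show "S' (Suc p) = []" using E sp by (simp add: S'_def)
  qed
  have F': "\<forall>p q. p < q \<longrightarrow> S' q \<noteq> [] \<longrightarrow> ?f (hd (S' p)) < ?f (hd (S' q))"
  proof (intro allI impI)
    fix p q assume pq: "p < q" and ne: "S' q \<noteq> []"
    show "?f (hd (S' p)) < ?f (hd (S' q))"
    proof (cases "q = j")
      case True
      then show ?thesis using jmin[of p] pq by (simp add: S'_def)
    next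
      case qj: False
      then have sq: "S' q = S q" "S q \<noteq> []" using ne by (auto simp: S'_def)
      show ?thesis
      proof (cases "p = j")
        case True
        have "S j \<noteq> []" using down[OF sq(2), of j] True pq by simp
        then have "?f m < ?f (hd (S j))" using jQ by simp
        moreover have "?f (hd (S j)) < ?f (hd (S q))" using F pq True sq by blast
        ultimately show ?thesis using True sq by (simp add: S'_def)
      next
        case False
        then show ?thesis using F pq sq qj by (simp add: S'_def)
      qed
    qed
  qed
  have G': "\<forall>p\<ge>Suc m. S' p = []" using G jle by (simp add: S'_def)
  have H': "\<forall>v p. v \<in> set (S' (Suc p)) \<longrightarrow> (\<exists>u\<in>set (S' p). u < v \<and> ?f u < ?f v)"
  proof (intro allI impI)
    fix v p assume v: "v \<in> set (S' (Suc p))"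
    have sub: "set (S p) \<subseteq> set (S' p)" using setS'[of p] by auto
    show "\<exists>u\<in>set (S' p). u < v \<and> ?f u < ?f v"
    proof (cases "v = m \<and> Suc p = j")
      case True
      then have "S p \<noteq> [] \<and> ?f (hd (S p)) < ?f m" using jmin[of p] by simp
      moreover have "hd (S p) < m" using A calculation by (metis hd_in_set lessThan_iff subsetD)
      ultimately show ?thesis using sub True by (metis hd_in_set subsetD)
    next
      case False
      then have "v \<in> set (S (Suc p))" using v setS' by (auto split: if_splits)
      then show ?thesis using H sub by blast
    qed
  qed
  have K': "\<forall>u v p q. u \<in> set (S' p) \<longrightarrow> v \<in> set (S' q) \<longrightarrow> u < v \<longrightarrow> ?f u < ?f v \<longrightarrow> p < q"
  proof (intro allI impI)
    fix u v p q assume u: "u \<in> set (S' p)" and v: "v \<in> set (S' q)" and uv: "u < v" and fuv: "?f u < ?f v"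
    show "p < q"
    proof (cases "v = m")
      case True
      then have qj: "q = j" using v setS' mnot by (auto split: if_splits)
      have "u \<noteq> m" using uv True by simp
      then have uS: "u \<in> set (S p)" using u setS' by (auto split: if_splits)
      show ?thesis
      proof (rule ccontr)
        assume "\<not> p < q"
        then have jp: "j \<le> p" using qj by simp
        have "S p \<noteq> []" using uS by auto
        then have sj: "S j \<noteq> []" using down jp by blast
        then have c1: "?f m < ?f (hd (S j))" using jQ by simp
        have c2: "?f (hd (S p)) \<le> ?f u" using sw_hd[OF D[rule_format, of p] uS] by simp
        show False
        proof (cases "p = j")
          case True then show False using c1 c2 fuv \<open>v = m\<close> by simp
        next
          case False
          then have "?f (hd (S j)) < ?f (hd (S p))" using F jp \<open>S p \<noteq> []\<close> by auto
          then show False using c1 c2 fuv \<open>v = m\<close> by simp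
        qed
      qed
    next
      case False
      then have vS: "v \<in> set (S q)" using v setS' by (auto split: if_splits)
      then have "v < m" using A by auto
      then have "u \<noteq> m" using uv by simp
      then have uS: "u \<in> set (S p)" using u setS' by (auto split: if_splits)
      show ?thesis using K uS vS uv fuv by blast
    qed
  qed
  show ?thesis unfolding PS pinv_def by (intro conjI A' B' C' D' E' F' G' H' K')
qed

lemma pinv_st:
  assumes "inj_on (seq0 a) {0..n}" "m \<le> Suc n"
  shows "pinv a m (st a m)"
  using assms(2)
proof (induction m)
  case 0 then show ?case by (simp add: st_def pinv_0)
next
  case (Suc m)
  have "inj_on (seq0 a) {0..m}" by (rule inj_on_subset[OF assms(1)]) (use Suc.prems in auto)
  moreover have "pinv a m (st a m)" using Suc.IH Suc.prems by simp
  ultimately show ?case unfolding st_Suc by (intro pinv_step)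
qed


lemma sw_cmp: "sorted_wrt R xs \<Longrightarrow> x \<in> set xs \<Longrightarrow> y \<in> set xs \<Longrightarrow> x \<noteq> y \<Longrightarrow> R x y \<or> R y x"
  by (induction xs) auto

lemma sw_distinct: "sorted_wrt (\<lambda>x y. y < x \<and> Q x y) (xs::nat list) \<Longrightarrow> distinct xs"
  by (induction xs) auto

lemma inj_seq0:
  assumes "is_perm_seq a n" shows "inj_on (seq0 a) {0..n}"
proof (rule inj_onI)
  fix x y assume x: "x \<in> {0..n}" and y: "y \<in> {0..n}" and e: "seq0 a x = seq0 a y"
  have ia: "inj_on a {1..n}" and ra: "a ` {1..n} \<subseteq> {1..n}" using assms by (auto simp: is_perm_seq_def)
  have apos: "a z \<ge> 1" if "z \<in> {1..n}" for z using ra that by (meson atLeastAtMost_iff image_subset_iff)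
  show "x = y"
  proof (cases "x = 0")
    case True
    then show ?thesis using e y apos[of y] by (cases "y = 0") (auto simp: seq0_def)
  next
    case False
    show ?thesis
    proof (cases "y = 0")
      case True then show ?thesis using e x apos[of x] False by (auto simp: seq0_def)
    next
      case False
      then show ?thesis using e x y \<open>x \<noteq> 0\<close> ia by (auto simp: seq0_def dest: inj_onD)
    qed
  qed
qed

lemma pinv_piles: "is_perm_seq a n \<Longrightarrow> pinv a (Suc n) (piles a n)"
  using pinv_st[OF inj_seq0, of a n "Suc n"] by (simp add: piles_def st_def)


theorem lemma4:
  fixes a :: "nat \<Rightarrow> nat" and n :: nat and I J :: "nat set" and t i j :: nat
  assumes "is_perm_seq a n"
    and "perm_graph_bipartite a n"
    and "max_feasible a n I" and "max_feasible a n J"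
    and "no_forbidden_pairs a n I J"
    and "leftmost_mixed a n I J t"
    and "set (piles a n t) = {i, j}" and "i \<in> I" and "j \<in> J" and "i \<noteq> j"
  shows "feasible a n ((I - {i}) \<union> {j}) \<or> feasible a n ((J - {j}) \<union> {i})"
proof -
  note perm = assms(1) and bip = assms(2) and mI = assms(3) and mJ = assms(4)
    and nfp = assms(5) and lm = assms(6) and tij = assms(7)
  let ?f = "seq0 a"
  define P where "P = piles a n"
  have inj: "inj_on (seq0 a) {0..n}" using perm by (rule inj_seq0)
  have pv: "pinv a (Suc n) P" unfolding P_def using perm by (rule pinv_piles)
  have A: "\<forall>p. set (P p) \<subseteq> {..<Suc n}" using pv unfolding pinv_def by (elim conjE) assumption
  have B: "\<forall>x<Suc n. \<exists>p. x \<in> set (P p)" using pv unfolding pinv_def by (elim conjE) assumption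
  have C: "\<forall>x p q. x \<in> set (P p) \<longrightarrow> x \<in> set (P q) \<longrightarrow> p = q" using pv unfolding pinv_def by (elim conjE) assumption
  have D: "\<forall>p. sorted_wrt (\<lambda>x y. y < x \<and> ?f x < ?f y) (P p)" using pv unfolding pinv_def by (elim conjE) assumption
  have H: "\<forall>v p. v \<in> set (P (Suc p)) \<longrightarrow> (\<exists>u\<in>set (P p). u < v \<and> ?f u < ?f v)" using pv unfolding pinv_def by (elim conjE) assumption
  have K: "\<forall>u v p q. u \<in> set (P p) \<longrightarrow> v \<in> set (P q) \<longrightarrow> u < v \<longrightarrow> ?f u < ?f v \<longrightarrow> p < q" using pv unfolding pinv_def by (elim conjE) assumption
  have ia: "inj_on a {1..n}" and ra: "a ` {1..n} \<subseteq> {1..n}" using perm by (auto simp: is_perm_seq_def)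
  have apos: "a z \<ge> 1" if "z \<in> {1..n}" for z using ra that by (meson atLeastAtMost_iff image_subset_iff)
  have s0: "?f x = a x" if "x \<noteq> 0" for x using that by (simp add: seq0_def)
  have uniq: "p = q" if "x \<in> set (P p)" "x \<in> set (P q)" for x p q using C that by blast
  have rng: "x \<le> n" if "x \<in> set (P p)" for x p using A that by fastforce
  have dec: "?f v < ?f u" if "u \<in> set (P p)" "v \<in> set (P p)" "u < v" for u v p
    using sw_cmp[OF D[rule_format, of p] that(1,2)] that(3) by auto
  have inc: "p < q" if "u \<in> set (P p)" "v \<in> set (P q)" "u < v" "?f u < ?f v" for u v p q
    using K that by blast
  have dist: "distinct (P p)" for p
    by (rule sw_distinct[where Q="\<lambda>x y. seq0 a x < seq0 a y"]) (use D in blast)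
  have zero: "0 \<in> set (P 0)"
  proof -
    obtain p where p: "0 \<in> set (P p)" using B by blast
    show ?thesis
    proof (cases p)
      case 0 then show ?thesis using p by simp
    next
      case (Suc q) then show ?thesis using H p by blast
    qed
  qed
  have nz: "x \<noteq> 0" if "x \<in> set (P p)" "p \<ge> 1" for x p
    using uniq[OF zero, of p] that by (cases "x = 0") auto
  define pf where "pf x = (THE p. x \<in> set (P p))" for x
  have pf_eq: "pf x = p" if "x \<in> set (P p)" for x p
    unfolding pf_def using that uniq by blast
  have pf: "x \<in> set (P (pf x))" if xn: "x \<le> n" for x
  proof -
    have "x < Suc n" using xn by simp
    then obtain p where "x \<in> set (P p)" using B by blast
    then show ?thesis using pf_eq by simp
  qed
  define prec where "prec x y \<longleftrightarrow> x < y \<and> a x < a y" for x y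
  have pf_pos: "pf x \<ge> 1" if "x \<in> {1..n}" for x
  proof (rule ccontr)
    assume "\<not> 1 \<le> pf x"
    then have "pf x = 0" by simp
    then have "x \<in> set (P 0)" using pf[of x] that by auto
    then have "?f x < ?f 0" using dec[OF zero] that by auto
    then show False by (simp add: seq0_def)
  qed
  have order: "pf x < pf y" if "x \<in> {1..n}" "y \<in> {1..n}" "prec x y" for x y
    using inc[OF pf pf, of x y] that s0 unfolding prec_def by auto
  define K where "K = Max (pf ` {0..n})"
  have pfK: "pf x \<le> K" if "x \<le> n" for x unfolding K_def using that by (intro Max_ge) auto
  obtain w where w: "w \<le> n" "pf w = K"
  proof -
    have "K \<in> pf ` {0..n}" unfolding K_def by (intro Max_in) auto
    then show ?thesis using that by auto
  qed
  have feas_pairs: "x < y \<Longrightarrow> a x < a y" if "feasible a n L" "x \<in> L" "y \<in> L" for L x y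
    using that unfolding feasible_def by blast
  have feas_sub: "L \<subseteq> {1..n}" if "feasible a n L" for L using that unfolding feasible_def by blast
  have cmp: "prec x y \<or> prec y x" if "feasible a n L" "x \<in> L" "y \<in> L" "x \<noteq> y" for L x y
    using feas_pairs[OF that(1,2,3)] feas_pairs[OF that(1,3,2)] that(4) unfolding prec_def
    by (cases "x < y") auto
  have prec_pf: "prec x y" if "feasible a n L" "x \<in> L" "y \<in> L" "pf x < pf y" for L x y
  proof -
    have "x \<noteq> y" using that(4) by auto
    then have "prec x y \<or> prec y x" using cmp that by blast
    moreover have xn: "x \<in> {1..n}" "y \<in> {1..n}" using feas_sub[OF that(1)] that(2,3) by auto
    moreover have "\<not> prec y x"
      using order[OF xn(2) xn(1)] that(4) by auto
    ultimately show ?thesis by blast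
  qed
  have inj_pf: "inj_on pf L" if "feasible a n L" for L
  proof (rule inj_onI)
    fix x y assume xy: "x \<in> L" "y \<in> L" "pf x = pf y"
    have xn: "x \<in> {1..n}" "y \<in> {1..n}" using xy feas_sub[OF that] by auto
    show "x = y"
    proof (rule ccontr)
      assume "x \<noteq> y"
      then have "prec x y \<or> prec y x" using cmp that xy by blast
      then show False using order xn xy(3) by fastforce
    qed
  qed
  have card_le: "card L \<le> K" if "feasible a n L" for L
  proof -
    have "pf ` L \<subseteq> {1..K}" using feas_sub[OF that] pf_pos pfK by fastforce
    then have "card (pf ` L) \<le> K" using card_mono[of "{1..K}" "pf ` L"] by simp
    then show ?thesis using card_image[OF inj_pf[OF that]] by simp
  qed
  have chain: "\<forall>v \<in> set (P (Suc p)). \<exists>L. L \<subseteq> {1..n} \<and> card L = Suc p \<and> v \<in> L \<and>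
      (\<forall>x\<in>L. x \<le> v \<and> a x \<le> a v) \<and> (\<forall>x\<in>L. \<forall>y\<in>L. x < y \<longrightarrow> a x < a y)" for p
  proof (induction p)
    case 0
    show ?case
    proof
      fix v assume v: "v \<in> set (P (Suc 0))"
      have "v \<in> {1..n}" using nz[OF v] rng[OF v] by auto
      then show "\<exists>L. L \<subseteq> {1..n} \<and> card L = Suc 0 \<and> v \<in> L \<and>
        (\<forall>x\<in>L. x \<le> v \<and> a x \<le> a v) \<and> (\<forall>x\<in>L. \<forall>y\<in>L. x < y \<longrightarrow> a x < a y)"
        by (intro exI[of _ "{v}"]) auto
    qed
  next
    case (Suc p)
    show ?case
    proof
      fix v assume v: "v \<in> set (P (Suc (Suc p)))"
      obtain u where u: "u \<in> set (P (Suc p))" "u < v" "?f u < ?f v" using H v by blast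
      obtain L where LL: "L \<subseteq> {1..n} \<and> card L = Suc p \<and> u \<in> L \<and>
        (\<forall>x\<in>L. x \<le> u \<and> a x \<le> a u) \<and> (\<forall>x\<in>L. \<forall>y\<in>L. x < y \<longrightarrow> a x < a y)"
        using bspec[OF Suc.IH u(1)] by (elim exE)
      have L1: "L \<subseteq> {1..n}" using LL by (elim conjE)
      have L2: "card L = Suc p" using LL by (elim conjE)
      have L3: "u \<in> L" using LL by (elim conjE)
      have L4: "\<forall>x\<in>L. x \<le> u \<and> a x \<le> a u" using LL by (elim conjE)
      have L5: "\<forall>x\<in>L. \<forall>y\<in>L. x < y \<longrightarrow> a x < a y" using LL by (elim conjE)
      note L = L1 L2 L3 L4 L5
      have vn: "v \<in> {1..n}" using nz[OF v] rng[OF v] by auto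
      have u0: "u \<noteq> 0" using nz[OF u(1)] by simp
      have v0: "v \<noteq> 0" using nz[OF v] by simp
      have auv: "a u < a v" using u(3) s0[OF u0] s0[OF v0] by simp
      have vL: "v \<notin> L" using L(4) u(2) by (meson leD)
      have fin: "finite L" using L(2) card.infinite by (metis nat.distinct(1))
      show "\<exists>L. L \<subseteq> {1..n} \<and> card L = Suc (Suc p) \<and> v \<in> L \<and>
        (\<forall>x\<in>L. x \<le> v \<and> a x \<le> a v) \<and> (\<forall>x\<in>L. \<forall>y\<in>L. x < y \<longrightarrow> a x < a y)"
      proof (intro exI[of _ "insert v L"] conjI)
        show "insert v L \<subseteq> {1..n}" using L(1) vn by auto
        show "card (insert v L) = Suc (Suc p)" using fin vL L(2) by simp
        show "v \<in> insert v L" by simp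
        show "\<forall>x\<in>insert v L. x \<le> v \<and> a x \<le> a v"
        proof
          fix x assume "x \<in> insert v L"
          then show "x \<le> v \<and> a x \<le> a v"
          proof
            assume "x \<in> L" then have "x \<le> u \<and> a x \<le> a u" using L(4) by blast
            then show ?thesis using u(2) auv by simp
          qed simp
        qed
        show "\<forall>x\<in>insert v L. \<forall>y\<in>insert v L. x < y \<longrightarrow> a x < a y"
        proof (intro ballI impI)
          fix x y assume x: "x \<in> insert v L" and y: "y \<in> insert v L" and xy: "x < y"
          show "a x < a y"
          proof (cases "y = v")
            case True
            then have "x \<in> L" using x xy by auto
            then have "a x \<le> a u" using L(4) by blast
            then show ?thesis using True auv by simp
          next
            case False
            then have yL: "y \<in> L" using y by simp
            then have "y \<le> u" using L(4) by blast
            then have "x \<noteq> v" using xy u(2) by auto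
            then have "x \<in> L" using x by simp
            then show ?thesis using L(5) yL xy by blast
          qed
        qed
      qed
    qed
  qed
  have iI: "i \<in> set (P t)" and jJ: "j \<in> set (P t)" using tij P_def by auto
  have Isub: "I \<subseteq> {1..n}" and Jsub: "J \<subseteq> {1..n}" using mI mJ feas_sub by (auto simp: max_feasible_def)
  have feasI: "feasible a n I" and feasJ: "feasible a n J" using mI mJ by (auto simp: max_feasible_def)
  have pfi: "pf i = t" and pfj: "pf j = t" using pf_eq iI jJ by auto
  have t1: "t \<ge> 1" using pf_pos[of i] pfi Isub assms(8) by auto
  have tK: "t \<le> K" using pfK[of i] pfi Isub assms(8) by auto
  have exC: "\<exists>L. feasible a n L \<and> card L = K"
  proof -
    obtain p where p: "K = Suc p" using t1 tK by (cases K) auto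
    have wP: "w \<in> set (P (Suc p))" using pf[OF w(1)] w(2) p by simp
    obtain L where LL: "L \<subseteq> {1..n} \<and> card L = Suc p \<and> w \<in> L \<and>
        (\<forall>x\<in>L. x \<le> w \<and> a x \<le> a w) \<and> (\<forall>x\<in>L. \<forall>y\<in>L. x < y \<longrightarrow> a x < a y)"
      using bspec[OF chain wP] by (elim exE)
    have L1: "L \<subseteq> {1..n}" using LL by (elim conjE)
    have L2: "card L = Suc p" using LL by (elim conjE)
    have L5: "\<forall>x\<in>L. \<forall>y\<in>L. x < y \<longrightarrow> a x < a y" using LL by (elim conjE)
    have "feasible a n L" unfolding feasible_def using L1 L5 by (intro conjI)
    then show ?thesis using p L2 by (intro exI[of _ L]) simp
  qed
  have full: "pf ` L = {1..K}" if "max_feasible a n L" for L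
  proof -
    have fL: "feasible a n L" using that by (simp add: max_feasible_def)
    have "card L \<ge> K" using that exC unfolding max_feasible_def by blast
    then have cL: "card L = K" using card_le[OF fL] by simp
    have sub: "pf ` L \<subseteq> {1..K}" using feas_sub[OF fL] pf_pos pfK by fastforce
    have "card (pf ` L) = K" using card_image[OF inj_pf[OF fL]] cL by simp
    then show ?thesis using sub by (intro card_subset_eq) auto
  qed
  have getI: "\<exists>x\<in>I. pf x = s" if "1 \<le> s" "s \<le> K" for s
  proof -
    have "s \<in> pf ` I" using full[OF mI] that by simp
    then obtain x where "x \<in> I" "s = pf x" by (rule imageE)
    then show ?thesis by blast
  qed
  have getJ: "\<exists>x\<in>J. pf x = s" if "1 \<le> s" "s \<le> K" for s
  proof -
    have "s \<in> pf ` J" using full[OF mJ] that by simp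
    then obtain x where "x \<in> J" "s = pf x" by (rule imageE)
    then show ?thesis by blast
  qed
  have edge: "pedge a n u v" if "u \<in> set (P s)" "v \<in> set (P s)" "u \<noteq> v" "s \<ge> 1" for u v s
  proof -
    have un: "u \<in> {1..n}" "v \<in> {1..n}" using nz rng that by (auto simp: Suc_le_eq)
    show ?thesis
    proof (cases "u < v")
      case True
      then have "?f v < ?f u" using dec that by blast
      then show ?thesis using un True s0 unfolding pedge_def by auto
    next
      case False
      then have "v < u" using that(3) by simp
      then have "?f u < ?f v" using dec that by blast
      then show ?thesis using un \<open>v < u\<close> s0 unfolding pedge_def by auto
    qed
  qed
  obtain X where X: "\<forall>u v. pedge a n u v \<longrightarrow> (u \<in> X \<longleftrightarrow> v \<notin> X)"
    using bip unfolding perm_graph_bipartite_def by blast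
  have tri: False if "u \<in> set (P s)" "v \<in> set (P s)" "x \<in> set (P s)" "u \<noteq> v" "u \<noteq> x" "v \<noteq> x" "s \<ge> 1" for u v x s
  proof -
    have "pedge a n u v" "pedge a n v x" "pedge a n u x" using edge that by blast+
    then show False using X by blast
  qed
  have set2: "set (P s) = {y, z}" if "s \<ge> 1" "y \<in> set (P s)" "z \<in> set (P s)" "y \<noteq> z" for s y z
    using tri[OF _ that(2,3)] that by blast
  have mixed_if: "mixed a n I J s" if "s \<ge> 1" "y \<in> set (P s)" "z \<in> set (P s)" "y \<in> I" "z \<in> J" "y \<noteq> z" for s y z
  proof -
    have e: "set (P s) = {y, z}" using set2 that by blast
    have "length (P s) = 2" using distinct_card[OF dist[of s]] e that(6) by simp
    then show ?thesis unfolding mixed_def P_def[symmetric] using e that by blast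
  qed
  have nomix: "\<not> mixed a n I J s" if "s < t" for s using lm that unfolding leftmost_mixed_def by blast
  have lowI: "prec x j" if xI: "x \<in> I" "pf x < t" for x
  proof -
    have s1: "pf x \<ge> 1" using pf_pos Isub that by blast
    obtain z where z: "z \<in> J" "pf z = pf x" using getJ[OF s1] tK xI by fastforce
    have "z = x"
    proof (rule ccontr)
      assume "z \<noteq> x"
      have "x \<in> set (P (pf x))" "z \<in> set (P (pf x))" using pf Isub Jsub that z by (auto, metis atLeastAtMost_iff subsetD)
      then have "mixed a n I J (pf x)" using mixed_if[OF s1] \<open>z \<noteq> x\<close> that z by metis
      then show False using nomix that by blast
    qed
    then show ?thesis using prec_pf[OF feasJ] z that assms(9) pfj by metis
  qed
  have lowJ: "prec x i" if xI: "x \<in> J" "pf x < t" for x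
  proof -
    have s1: "pf x \<ge> 1" using pf_pos Jsub that by blast
    obtain z where z: "z \<in> I" "pf z = pf x" using getI[OF s1] tK xI by fastforce
    have "z = x"
    proof (rule ccontr)
      assume "z \<noteq> x"
      have "x \<in> set (P (pf x))" "z \<in> set (P (pf x))" using pf Isub Jsub that z by (auto, metis atLeastAtMost_iff subsetD)
      then have "mixed a n I J (pf x)" using mixed_if[OF s1] \<open>z \<noteq> x\<close> that z by metis
      then show False using nomix that by blast
    qed
    then show ?thesis using prec_pf[OF feasI] z that assms(8) pfi by metis
  qed
  have swap: "feasible a n ((L - {e}) \<union> {c})"
    if fL: "feasible a n L" and e: "e \<in> L" "pf e = t" and c: "c \<in> {1..n}"
      and lo: "\<forall>x\<in>L. pf x < t \<longrightarrow> prec x c" and hi: "\<forall>x\<in>L. pf x > t \<longrightarrow> prec c x" for L e c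
  proof -
    have ix: "pf x \<noteq> t" if "x \<in> L" "x \<noteq> e" for x
      using inj_pf[OF fL] that e unfolding inj_on_def by metis
    have both: "prec x c \<or> prec c x" if "x \<in> L" "x \<noteq> e" for x
      using ix[OF that] lo hi that by (meson linorder_neqE_nat)
    show ?thesis unfolding feasible_def
    proof (intro conjI ballI impI)
      show "L - {e} \<union> {c} \<subseteq> {1..n}" using feas_sub[OF fL] c by auto
    next
      fix x y assume x: "x \<in> L - {e} \<union> {c}" and y: "y \<in> L - {e} \<union> {c}" and xy: "x < y"
      show "a x < a y"
      proof (cases "x = c")
        case True
        show ?thesis
        proof (cases "y = c")
          case True then show ?thesis using xy \<open>x = c\<close> by simp
        next
          case False
          then have "y \<in> L" "y \<noteq> e" using y by auto
          then show ?thesis using both \<open>x = c\<close> xy unfolding prec_def by fastforce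
        qed
      next
        case False
        then have xL: "x \<in> L" "x \<noteq> e" using x by auto
        show ?thesis
        proof (cases "y = c")
          case True then show ?thesis using both[OF xL] xy unfolding prec_def by fastforce
        next
          case False
          then have "y \<in> L" using y by auto
          then show ?thesis using feas_pairs[OF fL xL(1)] xy by blast
        qed
      qed
    qed
  qed
  have jn: "j \<in> {1..n}" and in_: "i \<in> {1..n}" using Isub Jsub assms(8,9) by auto
  have lowI': "\<forall>x\<in>I. pf x < t \<longrightarrow> prec x j" using lowI by blast
  have lowJ': "\<forall>x\<in>J. pf x < t \<longrightarrow> prec x i" using lowJ by blast
  have trans: "prec x z" if "prec x y" "prec y z" for x y z using that unfolding prec_def by auto
  have upI: "\<forall>x\<in>I. pf x > t \<longrightarrow> prec j x" if "y \<in> I" "pf y = Suc t" "prec j y" for y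
  proof (intro ballI impI)
    fix x assume "x \<in> I" "pf x > t"
    show "prec j x"
    proof (cases "x = y")
      case True then show ?thesis using that by simp
    next
      case False
      then have "pf x \<noteq> pf y" using inj_pf[OF feasI] \<open>x \<in> I\<close> that(1) unfolding inj_on_def by metis
      then have "pf y < pf x" using \<open>pf x > t\<close> that(2) by simp
      then show ?thesis using prec_pf[OF feasI that(1) \<open>x \<in> I\<close>] trans that(3) by blast
    qed
  qed
  have upJ: "\<forall>x\<in>J. pf x > t \<longrightarrow> prec i x" if "y \<in> J" "pf y = Suc t" "prec i y" for y
  proof (intro ballI impI)
    fix x assume "x \<in> J" "pf x > t"
    show "prec i x"
    proof (cases "x = y")
      case True then show ?thesis using that by simp
    next
      case False
      then have "pf x \<noteq> pf y" using inj_pf[OF feasJ] \<open>x \<in> J\<close> that(1) unfolding inj_on_def by metis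
      then have "pf y < pf x" using \<open>pf x > t\<close> that(2) by simp
      then show ?thesis using prec_pf[OF feasJ that(1) \<open>x \<in> J\<close>] trans that(3) by blast
    qed
  qed
  have resI: "feasible a n ((I - {i}) \<union> {j})" if "\<forall>x\<in>I. pf x > t \<longrightarrow> prec j x"
    using swap[OF feasI assms(8) pfi jn lowI' that] .
  have resJ: "feasible a n ((J - {j}) \<union> {i})" if "\<forall>x\<in>J. pf x > t \<longrightarrow> prec i x"
    using swap[OF feasJ assms(9) pfj in_ lowJ' that] .
  show ?thesis
  proof (cases "t < K")
    case False
    have "\<forall>x\<in>I. pf x > t \<longrightarrow> prec j x" using False pfK Isub by fastforce
    then show ?thesis using resI by blast
  next
    case True
    obtain y where y: "y \<in> I" "pf y = Suc t" using getI[of "Suc t"] True by auto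
    obtain z where z: "z \<in> J" "pf z = Suc t" using getJ[of "Suc t"] True by auto
    have yn: "y \<in> {1..n}" and zn: "z \<in> {1..n}" using y z Isub Jsub by auto
    have yP: "y \<in> set (P (Suc t))" and zP: "z \<in> set (P (Suc t))" using pf[of y] pf[of z] y z yn zn by auto
    have iy: "prec i y" using prec_pf[OF feasI assms(8) y(1)] pfi y by simp
    have jz: "prec j z" using prec_pf[OF feasJ assms(9) z(1)] pfj z by simp
    show ?thesis
    proof (cases "y = z")
      case True
      then show ?thesis using resI upI[OF y jz[unfolded True[symmetric]]] by blast
    next
      case False
      have mt: "mixed a n I J t" using lm unfolding leftmost_mixed_def by blast
      have mt1: "mixed a n I J (Suc t)" using mixed_if[OF _ yP zP y(1) z(1) False] by simp
      have sets: "set (P t) \<union> set (P (Suc t)) = {i, j, y, z}"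
        using tij set2[OF _ yP zP False] P_def by auto
      have nC4: "\<not> induces_C4 a n {i, j, y, z}"
        using nfp mt mt1 sets unfolding no_forbidden_pairs_def forbidden_pair_def P_def by force
      have nonedge: "prec u v \<or> prec v u" if "\<not> pedge a n u v" "u \<in> {1..n}" "v \<in> {1..n}" "u \<noteq> v" for u v
      proof -
        have "a u \<noteq> a v" using ia that(2,3,4) by (auto dest: inj_onD)
        then show ?thesis using that unfolding pedge_def prec_def by (cases "u < v") auto
      qed
      have pij: "pf i < pf y" "pf j < pf z" "pf i < pf z" "pf j < pf y" using pfi pfj y z by auto
      show ?thesis
      proof (cases "pedge a n j y")
        case False
        have "j \<noteq> y" using pij by auto
        then have "prec j y \<or> prec y j" using nonedge[OF False jn yn] by blast
        then have "prec j y" using order[OF yn jn] pij by fastforce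
        then show ?thesis using resI upI[OF y] by blast
      next
        case jy: True
        show ?thesis
        proof (cases "pedge a n z i")
          case False
          have "z \<noteq> i" using pij by auto
          then have "prec z i \<or> prec i z" using nonedge[OF False zn in_] by blast
          then have "prec i z" using order[OF zn in_] pij by fastforce
          then show ?thesis using resJ upJ[OF z] by blast
        next
          case zi: True
          have ij: "pedge a n i j" using edge[OF iI jJ assms(10) t1] .
          have yz: "pedge a n y z" using edge[OF yP zP False] by simp
          have niy: "\<not> pedge a n i y" using iy unfolding prec_def pedge_def by auto
          have njz: "\<not> pedge a n j z" using jz unfolding prec_def pedge_def by auto
          have "distinct [i, j, y, z]" using pij assms(10) False by auto
          then have "induces_C4 a n {i, j, y, z}"
            unfolding induces_C4_def using ij jy yz zi niy njz by blast
          then show ?thesis using nC4 by blast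
        qed
      qed
    qed
  qed
qed

end
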